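(* We have $K_{{\cal Z}_1}({\cal R}^1)=R_{q-1}$, so ${\cal R}^1$ is not exceptional for $K_{{\cal Z}_1}$. In fact for $z_0=\pi_1(0,\lambda,\nu, v)\in {\cal R}^1$, $$K_{{\cal Z}_1}(z)=B\begin{pmatrix}0&0\\ 0& I_{q-1}(v')\end{pmatrix} A$$ where $I_{q-1}$ denotes matrix inversion on ${\cal M}_{q-1}$, and $$v'=\left( {-v_{j,k}\over \lambda_j^2\nu_k^2}\right)_{2\le j,k\le q}, \quad A=\begin{pmatrix} 1 & 0& \cdots &0\\ -\lambda_2^{-1} & 1 & & \\ \vdots & & \ddots & \\ -\lambda_q^{-1} & & & 1\end{pmatrix}, \quad B = \begin{pmatrix} 1 & -\nu_2^{-1}& \cdots &-\nu_q^{-1}\\ 0& 1 & & \\ \vdots & & \ddots & \\ 0 & & & 1\end{pmatrix}.$$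
   Context: ${\cal M}_q$ is the space of complex $q\times q$ matrices, ${\bf P}({\cal M}_q)$ its projectivization. $I(x)=x^{-1}$ is matrix inversion, $J(x)=(1/x_{i,j})$ is entrywise reciprocal, and $K=I\circ J$, a birational map of ${\bf P}({\cal M}_q)$. $R_j$ denotes the set of matrices of rank $\le j$; $R_1$ is the smooth submanifold of rank-one matrices $\lambda\otimes\nu=(\lambda_i\nu_j)$. $\pi_1:{\cal Z}_1\to{\bf P}({\cal M}_q)$ is the blowup along $R_1$, with exceptional hypersurface ${\cal R}^1$, and $K_{{\cal Z}_1}=\pi_1^{-1}\circ K\circ\pi_1$ is the induced birational map. A hypersurface is exceptional if its strict transform has codimension $\ge 2$. Local coordinates: $U_1=\{z\in{\bf C}^q: z_1=1\}$; $V_{k,\ell}$ ($2\le k,\ell\le q$) is the set of matrices whose first row and first column vanish and whose $(k,\ell)$ entry equals $1$; the chart is $\pi_1:{\bf C}\times U_1\times U_1\times V_{k,\ell}\to\{x: x_{1,1}=1\}$, $\pi_1(s,\lambda,\nu,v)=\lambda\otimes\nu+sv$, in which ${\cal R}^1=\{s=0\}$ (after permuting rows/columns one may assume the $(1,1)$ entry is nonzero). *)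

theory Defs
  imports Complex_Main "Jordan_Normal_Form.Determinant"
begin

text \<open>Matrices are Jordan_Normal_Form matrices of dimension q x q; indices run over
  0..q-1, so index 0 plays the role of the paper's index 1.\<close>

text \<open>Matrix inversion I (total, via choice; meaningful for invertible matrices).\<close>
definition minv :: "complex mat \<Rightarrow> complex mat" where
  "minv x = (SOME y. y \<in> carrier_mat (dim_row x) (dim_row x) \<and> inverts_mat x y \<and> inverts_mat y x)"

definition Jmap :: "complex mat \<Rightarrow> complex mat" where
  "Jmap x = mat (dim_row x) (dim_col x) (\<lambda>(i,j). 1 / x $$ (i,j))"

definition Kmap :: "complex mat \<Rightarrow> complex mat" where
  "Kmap x = minv (Jmap x)"

definition tensor :: "complex vec \<Rightarrow> complex vec \<Rightarrow> complex mat" where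
  "tensor l n = mat (dim_vec l) (dim_vec n) (\<lambda>(i,j). l $ i * n $ j)"

text \<open>The blowup chart pi_1(s, lambda, nu, v) = lambda (x) nu + s v.\<close>
definition pi1 :: "complex \<Rightarrow> complex vec \<Rightarrow> complex vec \<Rightarrow> complex mat \<Rightarrow> complex mat" where
  "pi1 s l n v = tensor l n + s \<cdot>\<^sub>m v"

definition vprime :: "nat \<Rightarrow> complex vec \<Rightarrow> complex vec \<Rightarrow> complex mat \<Rightarrow> complex mat" where
  "vprime q l n v = mat (q - 1) (q - 1)
     (\<lambda>(j,k). - v $$ (Suc j, Suc k) / ((l $ Suc j)^2 * (n $ Suc k)^2))"

definition Amat :: "nat \<Rightarrow> complex vec \<Rightarrow> complex mat" where
  "Amat q l = mat q q (\<lambda>(i,j). if i = j then 1 else if j = 0 then - 1 / l $ i else 0)"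

definition Bmat :: "nat \<Rightarrow> complex vec \<Rightarrow> complex mat" where
  "Bmat q n = mat q q (\<lambda>(i,j). if i = j then 1 else if i = 0 then - 1 / n $ j else 0)"

definition KZ1_val :: "nat \<Rightarrow> complex vec \<Rightarrow> complex vec \<Rightarrow> complex mat \<Rightarrow> complex mat" where
  "KZ1_val q l n v = Bmat q n *
     four_block_mat (0\<^sub>m 1 1) (0\<^sub>m 1 (q - 1)) (0\<^sub>m (q - 1) 1) (minv (vprime q l n v))
     * Amat q l"

text \<open>Admissible chart data: lambda, nu in U_1, v in V_{k,l}, plus the genericity
  needed for the formula to make sense (nonzero entries of lambda, nu; v' invertible).\<close>
definition admissible :: "nat \<Rightarrow> complex vec \<Rightarrow> complex vec \<Rightarrow> complex mat \<Rightarrow> nat \<Rightarrow> nat \<Rightarrow> bool" where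
  "admissible q l n v k k' \<longleftrightarrow>
     dim_vec l = q \<and> dim_vec n = q \<and> l $ 0 = 1 \<and> n $ 0 = 1 \<and>
     v \<in> carrier_mat q q \<and> (\<forall>i<q. v $$ (0,i) = 0 \<and> v $$ (i,0) = 0) \<and>
     1 \<le> k \<and> k < q \<and> 1 \<le> k' \<and> k' < q \<and> v $$ (k,k') = 1 \<and>
     (\<forall>i<q. l $ i \<noteq> 0 \<and> n $ i \<noteq> 0) \<and> invertible_mat (vprime q l n v)"

end

theory Submission
  imports Defs
begin


lemma mult_entry_Suc:
  assumes "A \<in> carrier_mat r (Suc p)" "B \<in> carrier_mat (Suc p) c" "i < r" "j < c"
  shows "(A * B) $$ (i,j) = A $$ (i,0) * B $$ (0,j) + (\<Sum>m<p. A $$ (i,Suc m) * B $$ (Suc m,j))"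
proof -
  have "(A * B) $$ (i,j) = (\<Sum>m<Suc p. A $$ (i,m) * B $$ (m,j))"
    using assms by (simp add: scalar_prod_def atLeast0LessThan del: sum.lessThan_Suc)
  also have "\<dots> = A $$ (i,0) * B $$ (0,j) + (\<Sum>m<p. A $$ (i,Suc m) * B $$ (Suc m,j))"
    by (subst sum.lessThan_Suc_shift) simp
  finally show ?thesis .
qed

lemma Bmat_carrier[simp]: "Bmat q n \<in> carrier_mat q q" by (simp add: Bmat_def)
lemma Amat_carrier[simp]: "Amat q l \<in> carrier_mat q q" by (simp add: Amat_def)
lemma Amat_dims[simp]: "dim_row (Amat q l) = q" "dim_col (Amat q l) = q" by (simp_all add: Amat_def)
lemma Bmat_dims[simp]: "dim_row (Bmat q l) = q" "dim_col (Bmat q l) = q" by (simp_all add: Bmat_def)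

lemma Bmat_left0:
  assumes "X \<in> carrier_mat (Suc p) c" "j < c"
  shows "(Bmat (Suc p) n * X) $$ (0,j) = X $$ (0,j) - (\<Sum>m<p. X $$ (Suc m,j) / n $ Suc m)"
  using assms by (subst mult_entry_Suc[OF Bmat_carrier assms(1) _ assms(2)], simp) (simp add: Bmat_def
      sum_subtractf[symmetric] sum_negf[symmetric] sum.distrib[symmetric] field_simps)

lemma Bmat_leftS:
  assumes "X \<in> carrier_mat (Suc p) c" "j < c" "i < p"
  shows "(Bmat (Suc p) n * X) $$ (Suc i,j) = X $$ (Suc i,j)"
  using assms by (subst mult_entry_Suc[OF Bmat_carrier assms(1) _ assms(2)], simp) (simp add: Bmat_def
       if_distrib[where f="\<lambda>x. x * _"] cong: if_cong)

lemma Amat_right0: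
  assumes "X \<in> carrier_mat r (Suc p)" "i < r"
  shows "(X * Amat (Suc p) l) $$ (i,0) = X $$ (i,0) - (\<Sum>m<p. X $$ (i,Suc m) / l $ Suc m)"
  using assms by (subst mult_entry_Suc[OF assms(1) Amat_carrier assms(2)], simp) (simp add: Amat_def
      sum_subtractf[symmetric] sum_negf[symmetric] sum.distrib[symmetric] field_simps)

lemma Amat_rightS:
  assumes "X \<in> carrier_mat r (Suc p)" "i < r" "j < p"
  shows "(X * Amat (Suc p) l) $$ (i,Suc j) = X $$ (i,Suc j)"
  using assms by (subst mult_entry_Suc[OF assms(1) Amat_carrier assms(2)], simp) (simp add: Amat_def if_distrib[of "\<lambda>x. _ * x"] cong: if_cong)

lemma Bmat_right0:
  assumes "X \<in> carrier_mat r (Suc p)" "i < r"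
  shows "(X * Bmat (Suc p) n) $$ (i,0) = X $$ (i,0)"
  using assms by (subst mult_entry_Suc[OF assms(1) Bmat_carrier assms(2)], simp) (simp add: Bmat_def)

lemma Bmat_rightS:
  assumes "X \<in> carrier_mat r (Suc p)" "i < r" "j < p"
  shows "(X * Bmat (Suc p) n) $$ (i,Suc j) = X $$ (i,Suc j) - X $$ (i,0) / n $ Suc j"
  using assms by (subst mult_entry_Suc[OF assms(1) Bmat_carrier assms(2)], simp) (simp add: Bmat_def if_distrib[of "\<lambda>x. _ * x"] cong: if_cong)

lemma dg_carrier[simp]:
  assumes "A1 \<in> carrier_mat 1 1" "Y \<in> carrier_mat p p"
  shows "four_block_mat A1 (0\<^sub>m 1 p) (0\<^sub>m p 1) Y \<in> carrier_mat (Suc p) (Suc p)"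
  using four_block_carrier_mat[OF assms] by simp

lemma dg_entry:
  assumes "A1 \<in> carrier_mat 1 1" "Y \<in> carrier_mat p p" "i < Suc p" "j < Suc p"
  shows "four_block_mat A1 (0\<^sub>m 1 p) (0\<^sub>m p 1) Y $$ (i,j) =
     (if i = 0 then (if j = 0 then A1 $$ (0,0) else 0) else if j = 0 then 0 else Y $$ (i-1,j-1))"
  using assms by auto

lemma minv_eq:
  assumes F: "F \<in> carrier_mat n n" and Y: "Y \<in> carrier_mat n n"
    and FY: "F * Y = 1\<^sub>m n" and YF: "Y * F = 1\<^sub>m n"
  shows "minv F = Y"
  unfolding minv_def
proof (rule some_equality)
  show "Y \<in> carrier_mat (dim_row F) (dim_row F) \<and> inverts_mat F Y \<and> inverts_mat Y F"
    using F Y FY YF by (auto simp: inverts_mat_def)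
next
  fix y assume "y \<in> carrier_mat (dim_row F) (dim_row F) \<and> inverts_mat F y \<and> inverts_mat y F"
  hence y: "y \<in> carrier_mat n n" and yF: "y * F = 1\<^sub>m n" using F by (auto simp: inverts_mat_def)
  have "y = y * (F * Y)" using y FY by simp
  also have "\<dots> = (y * F) * Y" using y F Y by simp
  also have "\<dots> = Y" using yF Y by simp
  finally show "y = Y" .
qed

lemma invertible_minv:
  assumes F: "F \<in> carrier_mat n n" and inv: "invertible_mat F"
  shows "minv F \<in> carrier_mat n n" "F * minv F = 1\<^sub>m n" "minv F * F = 1\<^sub>m n"
proof -
  obtain B where FB: "F * B = 1\<^sub>m (dim_row F)" and BF: "B * F = 1\<^sub>m (dim_row B)"
    using inv unfolding invertible_mat_def inverts_mat_def by blast
  have "dim_col B = n" using arg_cong[OF FB, of dim_col] F by simp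
  moreover have "dim_row B = n" using arg_cong[OF BF, of dim_col] F by simp
  ultimately have B: "B \<in> carrier_mat n n" by auto
  have e: "minv F = B" using minv_eq[OF F B] FB BF F B by auto
  show "minv F \<in> carrier_mat n n" "F * minv F = 1\<^sub>m n" "minv F * F = 1\<^sub>m n"
    using e B FB BF F by auto
qed

lemma minv_det:
  assumes F: "F \<in> carrier_mat n n" and d: "det F \<noteq> 0"
  shows "minv F = (1 / det F) \<cdot>\<^sub>m adj_mat F" "F * minv F = 1\<^sub>m n" "minv F * F = 1\<^sub>m n"
    "minv F \<in> carrier_mat n n"
proof -
  note a = adj_mat[OF F]
  have 1: "F * ((1 / det F) \<cdot>\<^sub>m adj_mat F) = 1\<^sub>m n"
    using mult_smult_distrib[OF F a(1)] a(2) d by (auto intro!: eq_matI)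
  have 2: "((1 / det F) \<cdot>\<^sub>m adj_mat F) * F = 1\<^sub>m n"
    using mult_smult_assoc_mat[OF a(1) F] a(3) d by (auto intro!: eq_matI)
  show e: "minv F = (1 / det F) \<cdot>\<^sub>m adj_mat F"
    by (rule minv_eq[OF F _ 1 2]) (use a in auto)
  show "F * minv F = 1\<^sub>m n" "minv F * F = 1\<^sub>m n" "minv F \<in> carrier_mat n n"
    using 1 2 e a by auto
qed

lemma det_tendsto:
  fixes F :: "'b \<Rightarrow> complex mat"
  assumes F: "\<And>s. F s \<in> carrier_mat n n" and F0: "F0 \<in> carrier_mat n n"
    and lim: "\<And>i j. i < n \<Longrightarrow> j < n \<Longrightarrow> ((\<lambda>s. F s $$ (i,j)) \<longlongrightarrow> F0 $$ (i,j)) net"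
  shows "((\<lambda>s. det (F s)) \<longlongrightarrow> det F0) net"
proof -
  have e: "(\<lambda>s. det (F s)) = (\<lambda>s. (\<Sum> p \<in> {p. p permutes {0 ..< n}}.
     signof p * (\<Prod> i = 0 ..< n. F s $$ (i, p i))))"
    using det_def'[OF F] by auto
  show ?thesis unfolding e det_def'[OF F0]
  proof (intro tendsto_sum tendsto_mult tendsto_const tendsto_prod)
    fix p i assume "p \<in> {p. p permutes {0 ..< n}}" "i \<in> {0..<n}"
    hence "i < n" "p i < n" using permutes_in_image by fastforce+
    thus "((\<lambda>s. F s $$ (i, p i)) \<longlongrightarrow> F0 $$ (i, p i)) net" by (rule lim)
  qed
qed

lemma minv_tendsto:
  fixes F :: "'b \<Rightarrow> complex mat"
  assumes F: "\<And>s. F s \<in> carrier_mat n n" and F0: "F0 \<in> carrier_mat n n" and d: "det F0 \<noteq> 0"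
    and lim: "\<And>i j. i < n \<Longrightarrow> j < n \<Longrightarrow> ((\<lambda>s. F s $$ (i,j)) \<longlongrightarrow> F0 $$ (i,j)) net"
    and ij: "i < n" "j < n"
  shows "((\<lambda>s. minv (F s) $$ (i,j)) \<longlongrightarrow> minv F0 $$ (i,j)) net"
proof -
  have dl: "((\<lambda>s. det (F s)) \<longlongrightarrow> det F0) net" by (rule det_tendsto[OF F F0 lim])
  have ev: "eventually (\<lambda>s. det (F s) \<noteq> 0) net" by (rule tendsto_imp_eventually_ne[OF dl d])
  have cof: "\<And>G. G \<in> carrier_mat n n \<Longrightarrow> det G \<noteq> 0 \<Longrightarrow> minv G $$ (i,j) =
       1 / det G * ((-1)^(j+i) * det (mat_delete G j i))"
    using ij by (simp add: minv_det adj_mat_def cofactor_def)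
  have md: "((\<lambda>s. det (mat_delete (F s) j i)) \<longlongrightarrow> det (mat_delete F0 j i)) net"
  proof (rule det_tendsto[of _ "n - 1"])
    show "\<And>s. mat_delete (F s) j i \<in> carrier_mat (n - 1) (n - 1)" using F mat_delete_carrier by blast
    show "mat_delete F0 j i \<in> carrier_mat (n - 1) (n - 1)" using F0 mat_delete_carrier by blast
    fix a b assume ab: "a < n - 1" "b < n - 1"
      have dF: "dim_row (F s) = n" "dim_col (F s) = n" for s using F[of s] by auto
      show "((\<lambda>s. mat_delete (F s) j i $$ (a, b)) \<longlongrightarrow> mat_delete F0 j i $$ (a, b)) net"
      using ab F0 lim[of "if a < j then a else Suc a" "if b < i then b else Suc b"]
      by (cases "a<j"; cases "b<i") (auto simp: mat_delete_def dF)
  qed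
  have "((\<lambda>s. 1 / det (F s) * ((-1)^(j+i) * det (mat_delete (F s) j i))) \<longlongrightarrow>
        1 / det F0 * ((-1)^(j+i) * det (mat_delete F0 j i))) net"
    by (intro tendsto_intros dl md d)
  hence "((\<lambda>s. 1 / det (F s) * ((-1)^(j+i) * det (mat_delete (F s) j i))) \<longlongrightarrow> minv F0 $$ (i,j)) net"
    using cof[OF F0 d] by simp
  moreover have "eventually (\<lambda>s. 1 / det (F s) * ((-1)^(j+i) * det (mat_delete (F s) j i)) = minv (F s) $$ (i,j)) net"
    using ev by eventually_elim (simp add: cof[OF F])
  ultimately show ?thesis by (rule Lim_transform_eventually)
qed

lemma left_mult_tendsto:
  fixes F :: "'b \<Rightarrow> complex mat"
  assumes F: "\<And>s. F s \<in> carrier_mat n m" and F0: "F0 \<in> carrier_mat n m" and L: "L \<in> carrier_mat r n"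
    and lim: "\<And>i j. i < n \<Longrightarrow> j < m \<Longrightarrow> ((\<lambda>s. F s $$ (i,j)) \<longlongrightarrow> F0 $$ (i,j)) net"
    and ij: "i < r" "j < m"
  shows "((\<lambda>s. (L * F s) $$ (i,j)) \<longlongrightarrow> (L * F0) $$ (i,j)) net"
proof -
  have eq: "\<And>G. G \<in> carrier_mat n m \<Longrightarrow> (L * G) $$ (i,j) = (\<Sum>k=0..<n. L $$ (i,k) * G $$ (k,j))"
    using L ij by (simp add: scalar_prod_def)
  show ?thesis unfolding eq[OF F] eq[OF F0]
    by (intro tendsto_intros lim) (use ij in auto)
qed

lemma right_mult_tendsto:
  fixes F :: "'b \<Rightarrow> complex mat"
  assumes F: "\<And>s. F s \<in> carrier_mat n m" and F0: "F0 \<in> carrier_mat n m" and R: "R \<in> carrier_mat m r"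
    and lim: "\<And>i j. i < n \<Longrightarrow> j < m \<Longrightarrow> ((\<lambda>s. F s $$ (i,j)) \<longlongrightarrow> F0 $$ (i,j)) net"
    and ij: "i < n" "j < r"
  shows "((\<lambda>s. (F s * R) $$ (i,j)) \<longlongrightarrow> (F0 * R) $$ (i,j)) net"
proof -
  have eq: "\<And>G. G \<in> carrier_mat n m \<Longrightarrow> (G * R) $$ (i,j) = (\<Sum>k=0..<m. G $$ (i,k) * R $$ (k,j))"
    using R ij by (simp add: scalar_prod_def)
  show ?thesis unfolding eq[OF F] eq[OF F0]
    by (intro tendsto_intros lim) (use ij in auto)
qed



lemma part1:
  assumes p1: "p \<ge> 1" and adm: "admissible (Suc p) l n v k k'"
  shows "(\<forall>\<^sub>F s in at (0::complex). invertible_mat (Jmap (pi1 s l n v))) \<and>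
        (\<forall>i<Suc p. \<forall>j<Suc p. ((\<lambda>s. s * Kmap (pi1 s l n v) $$ (i,j)) \<longlongrightarrow> KZ1_val (Suc p) l n v $$ (i,j)) (at 0)) \<and>
        KZ1_val (Suc p) l n v \<noteq> 0\<^sub>m (Suc p) (Suc p) \<and> det (KZ1_val (Suc p) l n v) = 0"
proof -
  from adm have dl: "dim_vec l = Suc p" and dn: "dim_vec n = Suc p" and l0: "l$0 = 1" and n0: "n$0 = 1"
    and vC: "v \<in> carrier_mat (Suc p) (Suc p)"
    and v0: "\<And>i. i < Suc p \<Longrightarrow> v$$(0,i) = 0 \<and> v$$(i,0) = 0"
    and lnz: "\<And>i. i < Suc p \<Longrightarrow> l$i \<noteq> 0" and nnz: "\<And>i. i < Suc p \<Longrightarrow> n$i \<noteq> 0"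
    and vpi: "invertible_mat (vprime (Suc p) l n v)"
    unfolding admissible_def by auto
  define J where "J s = Jmap (pi1 s l n v)" for s
  have JC: "J s \<in> carrier_mat (Suc p) (Suc p)" for s
    using dl dn vC by (simp add: J_def Jmap_def pi1_def tensor_def)
  have Je: "J s $$ (i,j) = 1 / (l$i * n$j + s * v$$(i,j))" if "i < Suc p" "j < Suc p" for s i j
    using that dl dn vC by (simp add: J_def Jmap_def pi1_def tensor_def)
  define V where "V s = mat p p (\<lambda>(a,b). - v$$(Suc a,Suc b) /
      (l$Suc a * n$Suc b * (l$Suc a * n$Suc b + s * v$$(Suc a,Suc b))))" for s
  have VC: "V s \<in> carrier_mat p p" for s by (simp add: V_def)
  have vpC: "vprime (Suc p) l n v \<in> carrier_mat p p" by (simp add: vprime_def)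
  have V0: "V 0 = vprime (Suc p) l n v"
    by (rule eq_matI) (simp_all add: V_def vprime_def power2_eq_square mult_ac)
  note vpinv = invertible_minv[OF vpC vpi]
  have dV0: "det (V 0) \<noteq> 0"
    using det_mult[OF vpC vpinv(1)] vpinv(2) V0 by auto
  have Vlim: "((\<lambda>s. V s $$ (a,b)) \<longlongrightarrow> V 0 $$ (a,b)) (at 0)" if "a < p" "b < p" for a b
  proof -
    let ?c = "l$Suc a * n$Suc b" and ?w = "v$$(Suc a,Suc b)"
    have nz: "?c * (?c + 0 * ?w) \<noteq> 0"
      using lnz[of "Suc a"] nnz[of "Suc b"] that by simp
    have "((\<lambda>s. - ?w / (?c * (?c + s * ?w))) \<longlongrightarrow> - ?w / (?c * (?c + 0 * ?w))) (at 0)"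
      by (intro tendsto_intros) (use nz in auto)
    moreover have "V s $$ (a,b) = - ?w / (?c * (?c + s * ?w))" for s using that by (simp add: V_def)
    ultimately show ?thesis by simp
  qed
  have detlim: "((\<lambda>s. det (V s)) \<longlongrightarrow> det (V 0)) (at 0)"
    by (rule det_tendsto[OF VC VC Vlim])
  define W where "W s = (if det (V s) = 0 then 0\<^sub>m p p else minv (V s))" for s
  have WC: "W s \<in> carrier_mat p p" for s
    using minv_det(4)[OF VC] by (simp add: W_def)
  have Wlim: "((\<lambda>s. W s $$ (a,b)) \<longlongrightarrow> minv (vprime (Suc p) l n v) $$ (a,b)) (at 0)"
    if "a < p" "b < p" for a b
  proof -
    have "((\<lambda>s. minv (V s) $$ (a,b)) \<longlongrightarrow> minv (V 0) $$ (a,b)) (at 0)"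
      by (rule minv_tendsto[OF VC VC dV0 Vlim that])
    moreover have "eventually (\<lambda>s. minv (V s) $$ (a,b) = W s $$ (a,b)) (at 0)"
      using tendsto_imp_eventually_ne[OF detlim dV0] by eventually_elim (simp add: W_def)
    ultimately show ?thesis using V0 by (auto intro: Lim_transform_eventually)
  qed
  define X where "X s = four_block_mat (mat 1 1 (\<lambda>_. s)) (0\<^sub>m 1 p) (0\<^sub>m p 1) (W s)" for s
  define X0 where "X0 = four_block_mat (0\<^sub>m 1 1) (0\<^sub>m 1 p) (0\<^sub>m p 1) (minv (vprime (Suc p) l n v))"
  have XC: "X s \<in> carrier_mat (Suc p) (Suc p)" for s unfolding X_def by (rule dg_carrier) (use WC in auto)
  have X0C: "X0 \<in> carrier_mat (Suc p) (Suc p)" unfolding X0_def by (rule dg_carrier) (use vpinv in auto)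
  have Xe: "X s $$ (i,j) = (if i = 0 then (if j = 0 then s else 0) else if j = 0 then 0 else W s $$ (i-1,j-1))"
    if "i < Suc p" "j < Suc p" for s i j
    unfolding X_def by (subst dg_entry) (use that WC in auto)
  have X0e: "X0 $$ (i,j) = (if i = 0 then (if j = 0 then 0 else 0) else if j = 0 then 0 else minv (vprime (Suc p) l n v) $$ (i-1,j-1))"
    if "i < Suc p" "j < Suc p" for i j
    unfolding X0_def by (subst dg_entry) (use that vpinv in auto)
  have Xlim: "((\<lambda>s. X s $$ (i,j)) \<longlongrightarrow> X0 $$ (i,j)) (at 0)" if "i < Suc p" "j < Suc p" for i j
    using that Wlim[of "i-1" "j-1"] by (simp add: Xe X0e)
  define G where "G s = Bmat (Suc p) n * X s * Amat (Suc p) l" for s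
  have GC: "G s \<in> carrier_mat (Suc p) (Suc p)" for s unfolding G_def by (rule mult_carrier_mat[OF mult_carrier_mat[OF Bmat_carrier XC] Amat_carrier])
  have KZ: "KZ1_val (Suc p) l n v = Bmat (Suc p) n * X0 * Amat (Suc p) l"
    by (simp add: KZ1_val_def X0_def)
  have Glim: "((\<lambda>s. G s $$ (i,j)) \<longlongrightarrow> KZ1_val (Suc p) l n v $$ (i,j)) (at 0)"
    if "i < Suc p" "j < Suc p" for i j
    unfolding G_def KZ
  proof (rule right_mult_tendsto[OF _ _ Amat_carrier _ that])
    show "Bmat (Suc p) n * X s \<in> carrier_mat (Suc p) (Suc p)" for s by (rule mult_carrier_mat[OF Bmat_carrier XC])
    show "Bmat (Suc p) n * X0 \<in> carrier_mat (Suc p) (Suc p)" by (rule mult_carrier_mat[OF Bmat_carrier X0C])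
    show "((\<lambda>s. (Bmat (Suc p) n * X s) $$ (a, b)) \<longlongrightarrow> (Bmat (Suc p) n * X0) $$ (a, b)) (at 0)"
      if "a < Suc p" "b < Suc p" for a b
      by (rule left_mult_tendsto[OF XC X0C Bmat_carrier Xlim that])
  qed
  define E where "E s \<longleftrightarrow> s \<noteq> 0 \<and> (\<forall>i<Suc p. \<forall>j<Suc p. l$i * n$j + s * v$$(i,j) \<noteq> 0) \<and> det (V s) \<noteq> 0" for s
  have evE: "eventually E (at (0::complex))"
  proof -
    have e1: "eventually (\<lambda>s. s \<noteq> (0::complex)) (at 0)" by (simp add: eventually_at_filter)
    have e2: "eventually (\<lambda>s. \<forall>i\<in>{..<Suc p}. \<forall>j\<in>{..<Suc p}. l$i * n$j + s * v$$(i,j) \<noteq> 0) (at 0)"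
    proof (intro eventually_ball_finite ballI finite_lessThan)
      fix i j assume "i \<in> {..<Suc p}" "j \<in> {..<Suc p}"
      hence "l$i * n$j + 0 * v$$(i,j) \<noteq> 0" using lnz nnz by auto
      moreover have "((\<lambda>s. l$i * n$j + s * v$$(i,j)) \<longlongrightarrow> l$i * n$j + 0 * v$$(i,j)) (at (0::complex))"
        by (intro tendsto_intros)
      ultimately show "eventually (\<lambda>s. l$i * n$j + s * v$$(i,j) \<noteq> 0) (at 0)"
        using tendsto_imp_eventually_ne by blast
    qed
    have e3: "eventually (\<lambda>s. det (V s) \<noteq> 0) (at 0)" by (rule tendsto_imp_eventually_ne[OF detlim dV0])
    show ?thesis using e1 e2 e3 by eventually_elim (auto simp: E_def)
  qed
  have key: "J s * G s = s \<cdot>\<^sub>m 1\<^sub>m (Suc p)" if Es: "E s" for s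
  proof -
    from Es have s0: "s \<noteq> 0" and den: "\<And>i j. i < Suc p \<Longrightarrow> j < Suc p \<Longrightarrow> l$i * n$j + s * v$$(i,j) \<noteq> 0"
      and dV: "det (V s) \<noteq> 0" unfolding E_def by auto
    have Ws: "W s = minv (V s)" using dV by (simp add: W_def)
    have VW: "V s * W s = 1\<^sub>m p" using minv_det(2)[OF VC dV] Ws by simp
    define C where "C = J s * Bmat (Suc p) n"
    have CC: "C \<in> carrier_mat (Suc p) (Suc p)" unfolding C_def by (rule mult_carrier_mat[OF JC Bmat_carrier])
    have C0: "C $$ (i,0) = 1 / l$i" if "i < Suc p" for i
      unfolding C_def using that v0[OF that] n0 by (simp add: Bmat_right0[OF JC] Je)
    have C0S: "C $$ (0,Suc b) = 0" if "b < p" for b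
      unfolding C_def using that v0[of "Suc b"] v0[of 0] n0 l0 nnz[of "Suc b"]
      by (simp add: Bmat_rightS[OF JC] Je)
    have CSS: "C $$ (Suc a,Suc b) = s * V s $$ (a,b)" if "a < p" "b < p" for a b
    proof -
      have nz: "l$Suc a \<noteq> 0" "n$Suc b \<noteq> 0" "l$Suc a * n$Suc b + s * v$$(Suc a,Suc b) \<noteq> 0"
        using lnz nnz den that by auto
      show ?thesis unfolding C_def using that v0[of "Suc a"] n0 nz
        by (simp add: Bmat_rightS[OF JC] Je V_def field_simps)
    qed
    define D where "D = C * X s"
    have DC: "D \<in> carrier_mat (Suc p) (Suc p)" unfolding D_def by (rule mult_carrier_mat[OF CC XC])
    have D0: "D $$ (i,0) = s / l$i" if "i < Suc p" for i
      unfolding D_def using that by (simp add: mult_entry_Suc[OF CC XC] Xe C0)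
    have D0S: "D $$ (0,Suc b) = 0" if "b < p" for b
      unfolding D_def using that by (simp add: mult_entry_Suc[OF CC XC] Xe C0S)
    have DSS: "D $$ (Suc a,Suc b) = (if a = b then s else 0)" if "a < p" "b < p" for a b
    proof -
      have "D $$ (Suc a,Suc b) = (\<Sum>m<p. s * V s $$ (a,m) * W s $$ (m,b))"
        unfolding D_def using that by (simp add: mult_entry_Suc[OF CC XC] Xe CSS)
      also have "\<dots> = s * (V s * W s) $$ (a,b)"
        using that VC[of s] WC[of s] by (simp add: scalar_prod_def atLeast0LessThan sum_distrib_left mult_ac)
      also have "\<dots> = (if a = b then s else 0)" using VW that by simp
      finally show ?thesis .
    qed
    have DA: "D * Amat (Suc p) l = s \<cdot>\<^sub>m 1\<^sub>m (Suc p)"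
    proof (rule eq_matI)
      fix i j assume ij: "i < dim_row (s \<cdot>\<^sub>m 1\<^sub>m (Suc p))" "j < dim_col (s \<cdot>\<^sub>m 1\<^sub>m (Suc p))"
      hence i: "i < Suc p" and j: "j < Suc p" by auto
      show "(D * Amat (Suc p) l) $$ (i, j) = (s \<cdot>\<^sub>m 1\<^sub>m (Suc p)) $$ (i, j)"
      proof (cases j)
        case 0
        show ?thesis
        proof (cases i)
          case 0 thus ?thesis using \<open>j = 0\<close> l0 by (simp add: Amat_right0[OF DC] D0 D0S)
        next
          case (Suc a)
          thus ?thesis using \<open>j = 0\<close> i by (simp add: Amat_right0[OF DC] D0 DSS if_distrib[of "\<lambda>x. x / _"] cong: if_cong)
        qed
      next
        case (Suc b)
        show ?thesis
        proof (cases i)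
          case 0 thus ?thesis using \<open>j = Suc b\<close> j by (simp add: Amat_rightS[OF DC] D0S)
        next
          case (Suc a)
          thus ?thesis using \<open>j = Suc b\<close> i j by (simp add: Amat_rightS[OF DC] DSS)
        qed
      qed
    qed (use DC in auto)
    have "J s * G s = J s * (Bmat (Suc p) n * (X s * Amat (Suc p) l))"
      unfolding G_def by (simp add: assoc_mult_mat[OF Bmat_carrier XC Amat_carrier])
    also have "\<dots> = (J s * Bmat (Suc p) n) * (X s * Amat (Suc p) l)"
      by (rule assoc_mult_mat[OF JC Bmat_carrier mult_carrier_mat[OF XC Amat_carrier], symmetric])
    also have "\<dots> = ((J s * Bmat (Suc p) n) * X s) * Amat (Suc p) l"
      by (rule assoc_mult_mat[OF mult_carrier_mat[OF JC Bmat_carrier] XC Amat_carrier, symmetric])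
    also have "\<dots> = s \<cdot>\<^sub>m 1\<^sub>m (Suc p)" using DA by (simp add: D_def C_def)
    finally show ?thesis .
  qed
  have inv: "invertible_mat (J s) \<and> minv (J s) = (1/s) \<cdot>\<^sub>m G s" if Es: "E s" for s
  proof -
    have s0: "s \<noteq> 0" using Es E_def by auto
    define H where "H = (1/s) \<cdot>\<^sub>m G s"
    have HC: "H \<in> carrier_mat (Suc p) (Suc p)" using GC[of s] by (simp add: H_def)
    have "J s * H = (1/s) \<cdot>\<^sub>m (s \<cdot>\<^sub>m 1\<^sub>m (Suc p))"
      unfolding H_def using mult_smult_distrib[OF JC[of s] GC[of s]] key[OF Es] by simp
    also have "\<dots> = 1\<^sub>m (Suc p)" using s0 by (auto intro!: eq_matI)
    finally have JH: "J s * H = 1\<^sub>m (Suc p)" .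
    have HJ: "H * J s = 1\<^sub>m (Suc p)" by (rule mat_mult_left_right_inverse[OF JC HC JH])
    have "invertible_mat (J s)"
      unfolding invertible_mat_def inverts_mat_def square_mat.simps using JC[of s] JH HJ HC by auto
    moreover have "minv (J s) = H" by (rule minv_eq[OF JC HC JH HJ])
    ultimately show ?thesis by (simp add: H_def)
  qed
  have c1: "\<forall>\<^sub>F s in at (0::complex). invertible_mat (Jmap (pi1 s l n v))"
    using evE by eventually_elim (use inv J_def in auto)
  have c2: "((\<lambda>s. s * Kmap (pi1 s l n v) $$ (i,j)) \<longlongrightarrow> KZ1_val (Suc p) l n v $$ (i,j)) (at 0)"
    if "i < Suc p" "j < Suc p" for i j
  proof -
    have "eventually (\<lambda>s. G s $$ (i,j) = s * Kmap (pi1 s l n v) $$ (i,j)) (at 0)"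
      using evE
    proof eventually_elim
      case (elim s)
      hence "s \<noteq> 0" by (simp add: E_def)
      thus ?case using inv[OF elim] that GC[of s] by (simp add: Kmap_def J_def[symmetric])
    qed
    thus ?thesis using Glim[OF that] by (rule Lim_transform_eventually[rotated])
  qed
  have KZC: "KZ1_val (Suc p) l n v \<in> carrier_mat (Suc p) (Suc p)" unfolding KZ by (rule mult_carrier_mat[OF mult_carrier_mat[OF Bmat_carrier X0C] Amat_carrier])
  have KZe: "KZ1_val (Suc p) l n v $$ (Suc a, Suc b) = minv (vprime (Suc p) l n v) $$ (a,b)"
    if "a < p" "b < p" for a b
  proof -
    have "KZ1_val (Suc p) l n v $$ (Suc a, Suc b) = (Bmat (Suc p) n * X0) $$ (Suc a, Suc b)"
      unfolding KZ using X0C that by (subst Amat_rightS) auto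
    also have "\<dots> = X0 $$ (Suc a, Suc b)" using X0C that by (subst Bmat_leftS) auto
    finally show ?thesis using that by (simp add: X0e)
  qed
  obtain a b where ab: "a < p" "b < p" "minv (vprime (Suc p) l n v) $$ (a,b) \<noteq> 0"
  proof (rule ccontr)
    assume "\<not> thesis"
    with that have z: "\<And>a b. a < p \<Longrightarrow> b < p \<Longrightarrow> minv (vprime (Suc p) l n v) $$ (a,b) = 0" by blast
    have "minv (vprime (Suc p) l n v) = 0\<^sub>m p p" using vpinv(1) z by (auto intro!: eq_matI)
    hence "vprime (Suc p) l n v * minv (vprime (Suc p) l n v) = 0\<^sub>m p p" using right_mult_zero_mat[OF vpC] by simp
    hence "(1\<^sub>m p :: complex mat) = 0\<^sub>m p p" using vpinv(2) by simp
    hence "(1\<^sub>m p :: complex mat) $$ (0,0) = (0\<^sub>m p p :: complex mat) $$ (0,0)" by simp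
    thus False using p1 by simp
  qed
  have c3: "KZ1_val (Suc p) l n v \<noteq> 0\<^sub>m (Suc p) (Suc p)"
  proof
    assume "KZ1_val (Suc p) l n v = 0\<^sub>m (Suc p) (Suc p)"
    hence "KZ1_val (Suc p) l n v $$ (Suc a, Suc b) = 0" using ab by simp
    thus False using KZe[OF ab(1,2)] ab(3) by simp
  qed
  have dX0: "det X0 = 0"
    unfolding X0_def
    by (subst det_four_block_mat_lower_left_zero[of _ 1 _ p]) (use vpinv in auto)
  have c4: "det (KZ1_val (Suc p) l n v) = 0"
    unfolding KZ using det_mult[OF mult_carrier_mat[OF Bmat_carrier X0C] Amat_carrier]
      det_mult[OF Bmat_carrier X0C] dX0 by simp
  show ?thesis using c1 c2 c3 c4 by auto
qed



lemma matvec_Suc: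
  assumes "A \<in> carrier_mat r (Suc p)" "dim_vec y = Suc p" "i < r"
  shows "(A *\<^sub>v y) $ i = A $$ (i,0) * y $ 0 + (\<Sum>m<p. A $$ (i,Suc m) * y $ Suc m)"
proof -
  have "(A *\<^sub>v y) $ i = (\<Sum>m<Suc p. A $$ (i,m) * y $ m)"
    using assms by (simp add: scalar_prod_def atLeast0LessThan del: sum.lessThan_Suc)
  also have "\<dots> = A $$ (i,0) * y $ 0 + (\<Sum>m<p. A $$ (i,Suc m) * y $ Suc m)"
    by (subst sum.lessThan_Suc_shift) simp
  finally show ?thesis .
qed

lemma smult_inverse:
  assumes F: "F \<in> carrier_mat n n" and Y: "Y \<in> carrier_mat n n" and FY: "F * Y = 1\<^sub>m n"
    and YF: "Y * F = 1\<^sub>m n" and c: "(c::complex) \<noteq> 0"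
  shows "(c \<cdot>\<^sub>m F) * ((1/c) \<cdot>\<^sub>m Y) = 1\<^sub>m n" "((1/c) \<cdot>\<^sub>m Y) * (c \<cdot>\<^sub>m F) = 1\<^sub>m n"
proof -
  have "(c \<cdot>\<^sub>m F) * ((1/c) \<cdot>\<^sub>m Y) = c \<cdot>\<^sub>m ((1/c) \<cdot>\<^sub>m (F * Y))"
    using mult_smult_assoc_mat[OF F smult_carrier_mat[OF Y]] mult_smult_distrib[OF F Y] by simp
  also have "\<dots> = 1\<^sub>m n" using FY c by (auto intro!: eq_matI)
  finally show "(c \<cdot>\<^sub>m F) * ((1/c) \<cdot>\<^sub>m Y) = 1\<^sub>m n" .
  have "((1/c) \<cdot>\<^sub>m Y) * (c \<cdot>\<^sub>m F) = (1/c) \<cdot>\<^sub>m (c \<cdot>\<^sub>m (Y * F))"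
    using mult_smult_assoc_mat[OF Y smult_carrier_mat[OF F]] mult_smult_distrib[OF Y F] by simp
  also have "\<dots> = 1\<^sub>m n" using YF c by (auto intro!: eq_matI)
  finally show "((1/c) \<cdot>\<^sub>m Y) * (c \<cdot>\<^sub>m F) = 1\<^sub>m n" .
qed

lemma lin_helper:
  fixes a S d :: complex assumes "a * d + S = 0" "d \<noteq> 0" shows "- S / d = a"
proof -
  from assms(1) have "S = - (a*d)" by (simp add: add_eq_0_iff)
  thus ?thesis using assms(2) by simp
qed

lemma part2:
  assumes p1: "p \<ge> 1" and NC: "N \<in> carrier_mat (Suc p) (Suc p)"
  and xd: "dim_vec x = Suc p" and xnz: "\<forall>i<Suc p. x$i \<noteq> 0" and Nx: "N *\<^sub>v x = 0\<^sub>v (Suc p)"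
  and xsp: "\<forall>y. dim_vec y = Suc p \<and> N *\<^sub>v y = 0\<^sub>v (Suc p) \<longrightarrow> (\<exists>c. y = c \<cdot>\<^sub>v x)"
  and wd: "dim_vec w = Suc p" and wnz: "\<forall>i<Suc p. w$i \<noteq> 0" and Nw: "transpose_mat N *\<^sub>v w = 0\<^sub>v (Suc p)"
  shows "\<exists>l n v k k' c. admissible (Suc p) l n v k k' \<and> c \<noteq> 0 \<and> N = c \<cdot>\<^sub>m KZ1_val (Suc p) l n v"
proof -
  have x0: "x$0 \<noteq> 0" and w0: "w$0 \<noteq> 0" using xnz wnz by auto
  have row: "N $$ (i,0) * x$0 + (\<Sum>m<p. N $$ (i,Suc m) * x $ Suc m) = 0" if "i < Suc p" for i
  proof -
    have "(N *\<^sub>v x) $ i = 0" using Nx that by simp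
    thus ?thesis using matvec_Suc[OF NC xd that] by simp
  qed
  have col: "N $$ (0,j) * w$0 + (\<Sum>m<p. N $$ (Suc m,j) * w $ Suc m) = 0" if "j < Suc p" for j
  proof -
    have TC: "transpose_mat N \<in> carrier_mat (Suc p) (Suc p)" using NC by simp
    have "(transpose_mat N *\<^sub>v w) $ j = 0" using Nw that by simp
    thus ?thesis using matvec_Suc[OF TC wd that] that NC by simp
  qed
  define l where "l = vec (Suc p) (\<lambda>i. x$0 / x$i)"
  define n where "n = vec (Suc p) (\<lambda>i. w$0 / w$i)"
  have le: "l $ i = x$0 / x$i" "l $ i \<noteq> 0" if "i < Suc p" for i using that xnz x0 by (auto simp: l_def)
  have ne: "n $ i = w$0 / w$i" "n $ i \<noteq> 0" if "i < Suc p" for i using that wnz w0 by (auto simp: n_def)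
  define M where "M = mat p p (\<lambda>(a,b). N $$ (Suc a, Suc b))"
  have MC: "M \<in> carrier_mat p p" by (simp add: M_def)
  define Y0 where "Y0 = four_block_mat (0\<^sub>m 1 1) (0\<^sub>m 1 p) (0\<^sub>m p 1) M"
  have Y0C: "Y0 \<in> carrier_mat (Suc p) (Suc p)" unfolding Y0_def by (rule dg_carrier) (use MC in auto)
  have Y0e: "Y0 $$ (i,j) = (if i = 0 then 0 else if j = 0 then 0 else N $$ (i,j))"
    if "i < Suc p" "j < Suc p" for i j
    unfolding Y0_def by (subst dg_entry) (use that MC in \<open>auto simp: M_def\<close>)
  define P where "P = Bmat (Suc p) n * Y0"
  have PC: "P \<in> carrier_mat (Suc p) (Suc p)" unfolding P_def by (rule mult_carrier_mat[OF Bmat_carrier Y0C])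
  have PS: "P $$ (Suc a, j) = Y0 $$ (Suc a, j)" if "a < p" "j < Suc p" for a j
    unfolding P_def by (rule Bmat_leftS[OF Y0C that(2,1)])
  have P0S: "P $$ (0, Suc b) = N $$ (0, Suc b)" if "b < p" for b
  proof -
    have "P $$ (0, Suc b) = - (\<Sum>m<p. N $$ (Suc m, Suc b) * w $ Suc m) / w$0"
      unfolding P_def using that
      by (simp add: Bmat_left0[OF Y0C] Y0e ne divide_divide_eq_right sum_divide_distrib)
    also have "\<dots> = N $$ (0, Suc b)" using that by (intro lin_helper[OF col[of "Suc b"] w0]) simp
    finally show ?thesis .
  qed
  have P00: "P $$ (0,0) = 0" unfolding P_def by (simp add: Bmat_left0[OF Y0C] Y0e)
  have NE: "N = P * Amat (Suc p) l"
  proof (rule eq_matI)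
    fix i j assume ij: "i < dim_row (P * Amat (Suc p) l)" "j < dim_col (P * Amat (Suc p) l)"
    hence i: "i < Suc p" and j: "j < Suc p" using PC by auto
    show "N $$ (i, j) = (P * Amat (Suc p) l) $$ (i, j)"
    proof (cases j)
      case 0
      show ?thesis
      proof (cases i)
        case 0
        have "(P * Amat (Suc p) l) $$ (0,0) = - (\<Sum>m<p. N $$ (0, Suc m) * x $ Suc m) / x$0"
          by (simp add: Amat_right0[OF PC] P00 P0S le divide_divide_eq_right sum_divide_distrib)
        also have "\<dots> = N $$ (0,0)" by (rule lin_helper[OF row[of 0] x0]) simp
        finally show ?thesis using \<open>i = 0\<close> \<open>j = 0\<close> by simp
      next
        case (Suc a)
        have "(P * Amat (Suc p) l) $$ (Suc a,0) = - (\<Sum>m<p. N $$ (Suc a, Suc m) * x $ Suc m) / x$0"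
          using i Suc by (simp add: Amat_right0[OF PC] PS Y0e le divide_divide_eq_right sum_divide_distrib)
        also have "\<dots> = N $$ (Suc a,0)" using i Suc by (intro lin_helper[OF row[of "Suc a"] x0]) simp
        finally show ?thesis using \<open>i = Suc a\<close> \<open>j = 0\<close> by simp
      qed
    next
      case (Suc b)
      show ?thesis
      proof (cases i)
        case 0 thus ?thesis using \<open>j = Suc b\<close> j by (simp add: Amat_rightS[OF PC] P0S)
      next
        case (Suc a)
        thus ?thesis using \<open>j = Suc b\<close> i j by (simp add: Amat_rightS[OF PC] PS Y0e)
      qed
    qed
  qed (use PC NC in auto)
  have dM: "det M \<noteq> 0"
  proof
    assume "det M = 0"
    then obtain y where y: "y \<in> carrier_vec p" "y \<noteq> 0\<^sub>v p" "M *\<^sub>v y = 0\<^sub>v p"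
      using det_0_iff_vec_prod_zero[OF MC] by auto
    have inner: "(\<Sum>m<p. N $$ (Suc a, Suc m) * y $ m) = 0" if "a < p" for a
    proof -
      have "(M *\<^sub>v y) $ a = 0" using y(3) that by simp
      thus ?thesis using that y(1) MC by (simp add: M_def scalar_prod_def atLeast0LessThan)
    qed
    define z where "z = vec (Suc p) (\<lambda>i. if i = 0 then 0 else y $ (i - 1))"
    have zd: "dim_vec z = Suc p" by (simp add: z_def)
    have Nz: "N *\<^sub>v z = 0\<^sub>v (Suc p)"
    proof (rule eq_vecI)
      fix i assume "i < dim_vec (0\<^sub>v (Suc p) :: complex vec)"
      hence i: "i < Suc p" by simp
      have e: "(N *\<^sub>v z) $ i = (\<Sum>m<p. N $$ (i,Suc m) * y $ m)"
        using matvec_Suc[OF NC zd i] by (simp add: z_def)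
      show "(N *\<^sub>v z) $ i = 0\<^sub>v (Suc p) $ i"
      proof (cases i)
        case (Suc a) thus ?thesis using e inner[of a] i by simp
      next
        case 0
        have "(\<Sum>m<p. N $$ (0,Suc m) * y $ m) =
              (\<Sum>m<p. (- (\<Sum>m'<p. N $$ (Suc m', Suc m) * w $ Suc m') / w$0) * y $ m)"
        proof (rule sum.cong[OF refl])
          fix m assume "m \<in> {..<p}"
          hence "N $$ (0,Suc m) = - (\<Sum>m'<p. N $$ (Suc m', Suc m) * w $ Suc m') / w$0"
            using \<open>m \<in> {..<p}\<close> by (intro lin_helper[OF col[of "Suc m"] w0, symmetric]) simp
          thus "N $$ (0,Suc m) * y $ m = (- (\<Sum>m'<p. N $$ (Suc m', Suc m) * w $ Suc m') / w$0) * y $ m"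
            by simp
        qed
        also have "\<dots> = - (\<Sum>m<p. \<Sum>m'<p. N $$ (Suc m', Suc m) * w $ Suc m' * y $ m) / w$0"
          by (simp add: sum_distrib_right sum_divide_distrib sum_negf)
        also have "(\<Sum>m<p. \<Sum>m'<p. N $$ (Suc m', Suc m) * w $ Suc m' * y $ m) =
              (\<Sum>m'<p. w $ Suc m' * (\<Sum>m<p. N $$ (Suc m', Suc m) * y $ m))"
          by (subst sum.swap) (simp add: sum_distrib_left mult_ac)
        also have "\<dots> = 0" using inner by simp
        finally show ?thesis using e 0 by simp
      qed
    qed (use NC in simp)
    then obtain c where zc: "z = c \<cdot>\<^sub>v x" using xsp zd by blast
    have "z $ 0 = c * x $ 0" using zc xd by simp
    hence c0: "c = 0" using x0 by (simp add: z_def)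
    have "y = 0\<^sub>v p"
    proof (rule eq_vecI)
      fix a assume "a < dim_vec (0\<^sub>v p :: complex vec)"
      hence a: "a < p" by simp
      have "z $ Suc a = 0" using zc c0 xd a by simp
      thus "y $ a = 0\<^sub>v p $ a" using a by (simp add: z_def)
    qed (use y(1) in auto)
    thus False using y(2) by simp
  qed
  define Y' where "Y' = minv M"
  note Mi = minv_det[OF MC dM, folded Y'_def]
  obtain a b where ab: "a < p" "b < p" "Y' $$ (a,b) \<noteq> 0"
  proof (rule ccontr)
    assume "\<not> thesis"
    with that have z: "\<And>a b. a < p \<Longrightarrow> b < p \<Longrightarrow> Y' $$ (a,b) = 0" by blast
    have "Y' = 0\<^sub>m p p" using Mi(4) z by (auto intro!: eq_matI)
    hence "M * Y' = 0\<^sub>m p p" using right_mult_zero_mat[OF MC] by simp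
    hence "(1\<^sub>m p :: complex mat) = 0\<^sub>m p p" using Mi(2) by simp
    hence "(1\<^sub>m p :: complex mat) $$ (0,0) = (0\<^sub>m p p :: complex mat) $$ (0,0)" by simp
    thus False using p1 by simp
  qed
  have lnz: "l $ Suc a \<noteq> 0" and nnz: "n $ Suc b \<noteq> 0" using le ne ab by auto
  define c where "c = - 1 / (Y' $$ (a,b) * (l $ Suc a)^2 * (n $ Suc b)^2)"
  have c0: "c \<noteq> 0" using ab(3) lnz nnz by (simp add: c_def)
  define v where "v = mat (Suc p) (Suc p) (\<lambda>(i,j). if i = 0 \<or> j = 0 then 0 else
      - c * Y' $$ (i-1,j-1) * (l $ i)^2 * (n $ j)^2)"
  have vC: "v \<in> carrier_mat (Suc p) (Suc p)" by (simp add: v_def)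
  have vab: "v $$ (Suc a, Suc b) = 1" using ab lnz nnz by (simp add: v_def c_def field_simps)
  have vp: "vprime (Suc p) l n v = c \<cdot>\<^sub>m Y'"
  proof (rule eq_matI)
    fix i j assume "i < dim_row (c \<cdot>\<^sub>m Y')" "j < dim_col (c \<cdot>\<^sub>m Y')"
    hence ij: "i < p" "j < p" using Mi(4) by auto
    have "l $ Suc i \<noteq> 0" "n $ Suc j \<noteq> 0" using le ne ij by auto
    thus "vprime (Suc p) l n v $$ (i, j) = (c \<cdot>\<^sub>m Y') $$ (i, j)"
      using ij Mi(4) by (simp add: vprime_def v_def field_simps)
  qed (use Mi(4) in \<open>auto simp: vprime_def\<close>)
  have vpC: "vprime (Suc p) l n v \<in> carrier_mat p p" by (simp add: vprime_def)
  note si = smult_inverse[OF Mi(4) MC Mi(3) Mi(2) c0]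
  have vpinv: "invertible_mat (vprime (Suc p) l n v)"
    unfolding invertible_mat_def inverts_mat_def square_mat.simps vp
    using si Mi(4) MC by (intro conjI exI[of _ "(1/c) \<cdot>\<^sub>m M"]) auto
  have mvp: "minv (vprime (Suc p) l n v) = (1/c) \<cdot>\<^sub>m M"
    unfolding vp by (rule minv_eq[OF smult_carrier_mat[OF Mi(4)] smult_carrier_mat[OF MC] si])
  have adm: "admissible (Suc p) l n v (Suc a) (Suc b)"
    unfolding admissible_def using vC vab vpinv ab le ne x0 w0
    by (auto simp: l_def n_def v_def)
  define X0 where "X0 = four_block_mat (0\<^sub>m 1 1) (0\<^sub>m 1 p) (0\<^sub>m p 1) ((1/c) \<cdot>\<^sub>m M)"
  have X0C: "X0 \<in> carrier_mat (Suc p) (Suc p)" unfolding X0_def by (rule dg_carrier) (use MC in auto)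
  have KZ: "KZ1_val (Suc p) l n v = Bmat (Suc p) n * X0 * Amat (Suc p) l"
    by (simp add: KZ1_val_def X0_def mvp)
  have cX0: "c \<cdot>\<^sub>m X0 = Y0"
  proof (rule eq_matI)
    fix i j assume "i < dim_row Y0" "j < dim_col Y0"
    hence ij: "i < Suc p" "j < Suc p" using Y0C by auto
    have e1: "X0 $$ (i,j) = (if i = 0 then (if j = 0 then (0\<^sub>m 1 1::complex mat) $$ (0,0) else 0)
       else if j = 0 then 0 else ((1/c) \<cdot>\<^sub>m M) $$ (i-1,j-1))"
      unfolding X0_def by (rule dg_entry[OF _ smult_carrier_mat[OF MC] ij]) simp
    have e2: "Y0 $$ (i,j) = (if i = 0 then (if j = 0 then (0\<^sub>m 1 1::complex mat) $$ (0,0) else 0)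
       else if j = 0 then 0 else M $$ (i-1,j-1))"
      unfolding Y0_def by (rule dg_entry[OF _ MC ij]) simp
    show "(c \<cdot>\<^sub>m X0) $$ (i, j) = Y0 $$ (i, j)"
      using ij X0C c0 MC e1 e2 by simp
  qed (use X0C Y0C in auto)
  have "c \<cdot>\<^sub>m KZ1_val (Suc p) l n v = (c \<cdot>\<^sub>m (Bmat (Suc p) n * X0)) * Amat (Suc p) l"
    unfolding KZ by (rule mult_smult_assoc_mat[OF mult_carrier_mat[OF Bmat_carrier X0C] Amat_carrier, symmetric])
  also have "\<dots> = Bmat (Suc p) n * (c \<cdot>\<^sub>m X0) * Amat (Suc p) l"
    by (simp add: mult_smult_distrib[OF Bmat_carrier X0C])
  also have "\<dots> = N" using NE cX0 by (simp add: P_def)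
  finally show ?thesis using adm c0 by metis
qed

theorem proposition2p1:
  fixes q :: nat
  assumes "q \<ge> 2"
  shows
    "(\<forall>l n v k k'. admissible q l n v k k' \<longrightarrow>
        (\<forall>\<^sub>F s in at (0::complex). invertible_mat (Jmap (pi1 s l n v))) \<and>
        (\<forall>i<q. \<forall>j<q. ((\<lambda>s. s * Kmap (pi1 s l n v) $$ (i,j)) \<longlongrightarrow> KZ1_val q l n v $$ (i,j)) (at 0)) \<and>
        KZ1_val q l n v \<noteq> 0\<^sub>m q q \<and> det (KZ1_val q l n v) = 0)
   \<and> (\<forall>N \<in> carrier_mat q q.
        (\<exists>x. dim_vec x = q \<and> (\<forall>i<q. x $ i \<noteq> 0) \<and> N *\<^sub>v x = 0\<^sub>v q \<and>
             (\<forall>y. dim_vec y = q \<and> N *\<^sub>v y = 0\<^sub>v q \<longrightarrow> (\<exists>c. y = c \<cdot>\<^sub>v x))) \<and>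
        (\<exists>w. dim_vec w = q \<and> (\<forall>i<q. w $ i \<noteq> 0) \<and> transpose_mat N *\<^sub>v w = 0\<^sub>v q)
        \<longrightarrow> (\<exists>l n v k k' c. admissible q l n v k k' \<and> c \<noteq> 0 \<and> N = c \<cdot>\<^sub>m KZ1_val q l n v))"
proof -
  define p where "p = q - 1"
  have qp: "q = Suc p" and p1: "p \<ge> 1" using assms by (auto simp: p_def)
  have A: "\<forall>l n v k k'. admissible q l n v k k' \<longrightarrow>
        (\<forall>\<^sub>F s in at (0::complex). invertible_mat (Jmap (pi1 s l n v))) \<and>
        (\<forall>i<q. \<forall>j<q. ((\<lambda>s. s * Kmap (pi1 s l n v) $$ (i,j)) \<longlongrightarrow> KZ1_val q l n v $$ (i,j)) (at 0)) \<and>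
        KZ1_val q l n v \<noteq> 0\<^sub>m q q \<and> det (KZ1_val q l n v) = 0"
    unfolding qp using part1[OF p1] by blast
  have B: "\<forall>N \<in> carrier_mat q q.
        (\<exists>x. dim_vec x = q \<and> (\<forall>i<q. x $ i \<noteq> 0) \<and> N *\<^sub>v x = 0\<^sub>v q \<and>
             (\<forall>y. dim_vec y = q \<and> N *\<^sub>v y = 0\<^sub>v q \<longrightarrow> (\<exists>c. y = c \<cdot>\<^sub>v x))) \<and>
        (\<exists>w. dim_vec w = q \<and> (\<forall>i<q. w $ i \<noteq> 0) \<and> transpose_mat N *\<^sub>v w = 0\<^sub>v q)
        \<longrightarrow> (\<exists>l n v k k' c. admissible q l n v k k' \<and> c \<noteq> 0 \<and> N = c \<cdot>\<^sub>m KZ1_val q l n v)"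
  proof (intro ballI impI)
    fix N :: "complex mat" assume NC: "N \<in> carrier_mat q q" and H: "(\<exists>x. dim_vec x = q \<and> (\<forall>i<q. x $ i \<noteq> 0) \<and> N *\<^sub>v x = 0\<^sub>v q \<and>
             (\<forall>y. dim_vec y = q \<and> N *\<^sub>v y = 0\<^sub>v q \<longrightarrow> (\<exists>c. y = c \<cdot>\<^sub>v x))) \<and>
        (\<exists>w. dim_vec w = q \<and> (\<forall>i<q. w $ i \<noteq> 0) \<and> transpose_mat N *\<^sub>v w = 0\<^sub>v q)"
    then obtain x w where x: "dim_vec x = q" "\<forall>i<q. x $ i \<noteq> 0" "N *\<^sub>v x = 0\<^sub>v q"
      "\<forall>y. dim_vec y = q \<and> N *\<^sub>v y = 0\<^sub>v q \<longrightarrow> (\<exists>c. y = c \<cdot>\<^sub>v x)"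
      and w: "dim_vec w = q" "\<forall>i<q. w $ i \<noteq> 0" "transpose_mat N *\<^sub>v w = 0\<^sub>v q" by blast
    show "\<exists>l n v k k' c. admissible q l n v k k' \<and> c \<noteq> 0 \<and> N = c \<cdot>\<^sub>m KZ1_val q l n v"
      using part2[OF p1, of N x w] NC x w unfolding qp by blast
  qed
  show ?thesis using A B by blast
qed

end
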